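(* Define $k:[0,1]\times[0,1]\to\mathbb{R}$ by $k(a,b)=a\ln\frac{a+b}{a}+b\ln\frac{a+b}{b}$ (equivalently $k(a,b)=\eta(a)+\eta(b)-\eta(a+b)$ with $\eta(u)=-u\ln u$, $\eta(0)=0$). Then $k$ is a positive definite kernel on $[0,1]$. Moreover, for all $x,y\in(0,1]$, $$k(x,y)=\int_{\mathbb R}\Phi_w(x)^*\,\Phi_w(y)\,dw,\qquad \Phi_w(x)=e^{-iw\ln x}\sqrt{x\,\rho(w)},\quad \rho(w)=\frac{2\,\mathrm{sech}(\pi w)}{1+4w^2},$$ where ${}^*$ denotes complex conjugation.
   Context: A symmetric map $k:\mathcal X\times\mathcal X\to\mathbb R$ is a positive definite kernel if $\sum_{i,j=1}^n a_ia_jk(x_i,x_j)\ge0$ for all $n$, all $a_1,\dots,a_n\in\mathbb R$ and all $x_1,\dots,x_n\in\mathcal X$. Convention: $0\ln 0=0$. *)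

theory Defs
  imports "HOL-Analysis.Analysis"
begin

definition eta :: "real \<Rightarrow> real" where
  "eta u = (if u = 0 then 0 else - u * ln u)"

definition kent :: "real \<Rightarrow> real \<Rightarrow> real" where
  "kent a b = eta a + eta b - eta (a + b)"

definition pos_def_kernel :: "'a set \<Rightarrow> ('a \<Rightarrow> 'a \<Rightarrow> real) \<Rightarrow> bool" where
  "pos_def_kernel X k \<longleftrightarrow>
     (\<forall>x\<in>X. \<forall>y\<in>X. k x y = k y x) \<and>
     (\<forall>n::nat. \<forall>a::nat \<Rightarrow> real. \<forall>x::nat \<Rightarrow> 'a. (\<forall>i\<in>{1..n}. x i \<in> X) \<longrightarrow>
        (\<Sum>i=1..n. \<Sum>j=1..n. a i * a j * k (x i) (x j)) \<ge> 0)"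

definition rho :: "real \<Rightarrow> real" where
  "rho w = 2 * (1 / cosh (pi * w)) / (1 + 4 * w\<^sup>2)"

definition Phi :: "real \<Rightarrow> real \<Rightarrow> complex" where
  "Phi w x = exp (- \<i> * complex_of_real (w * ln x)) * complex_of_real (sqrt (x * rho w))"

end

theory Submission
  imports Defs "HOL-Complex_Analysis.Complex_Analysis" "HOL-Real_Asymp.Real_Asymp"
begin

lemma cosh_Complex: "cosh (Complex x y) = Complex (cosh x * cos y) (sinh x * sin y)"
  by (simp add: cosh_def sinh_def complex_eq_iff exp_eq_polar Re_exp Im_exp field_simps)

lemma sinh_Complex: "sinh (Complex x y) = Complex (sinh x * cos y) (cosh x * sin y)"
  by (simp add: cosh_def sinh_def complex_eq_iff exp_eq_polar Re_exp Im_exp field_simps)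

lemma cosh_of_real': "cosh (complex_of_real x) = complex_of_real (cosh x)"
  using cosh_Complex[of x 0] by (simp add: complex_of_real_def)

lemma has_contour_integral_linepath_same_Im_iff:
  assumes "Im z = c" "Im z' = c" "Re z = a" "Re z' = b" "a < b"
  shows   "(f has_contour_integral I) (linepath z z') \<longleftrightarrow>
             ((\<lambda>x. f (Complex x c)) has_integral I) {a..b}"
proof -
  have "(f has_contour_integral I) (linepath z z') \<longleftrightarrow>
          ((\<lambda>x. f (linepath z z' x) * (z' - z)) has_integral I) {0..1}"
    by (subst has_contour_integral_linepath) simp_all
  also have "\<dots> \<longleftrightarrow> ((\<lambda>x. f (Complex (a + (b - a) * x) c) * of_real (b - a)) has_integral I) {0..1}"
    using assms
    by (intro has_integral_cong arg_cong2[of _ _ _ _ "(*)"] arg_cong[of _ _ f])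
       (auto simp: linepath_def complex_eq_iff algebra_simps)
  also have "{0..1} = (\<lambda>x. x / (b - a)) ` {0..b-a}"
    using assms by simp
  also have "((\<lambda>x. f (Complex (a + (b - a) * x) c) * of_real (b - a)) has_integral I) \<dots> \<longleftrightarrow>
             ((\<lambda>x. f (Complex (a + x) c) * of_real (b - a)) has_integral ((b-a) *\<^sub>R I)) {0..b-a}"
    by (subst has_integral_stretch_real_iff) (use assms in simp_all)
  also have "\<dots> \<longleftrightarrow> ((\<lambda>x. of_real (b-a) * (f (Complex x c))) has_integral (b-a) *\<^sub>R I) {a..b}"
    by (subst has_integral_shift_real_ivl_iff[where c = "-a"])
       (simp_all add: scaleR_conv_of_real mult_ac)
  also have "\<dots> \<longleftrightarrow> ((\<lambda>x. f (Complex x c)) has_integral I) {a..b}"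
    by (subst has_integral_mult_right_iff) (use assms in \<open>auto simp: scaleR_conv_of_real\<close>)
  finally show ?thesis .
qed

lemma holomorphic_on_cosh' [holomorphic_intros]:
  assumes "f holomorphic_on A"
  shows   "(\<lambda>x. cosh (f x)) holomorphic_on A"
  unfolding cosh_def by (intro holomorphic_intros assms)

definition fC :: "real \<Rightarrow> complex \<Rightarrow> complex" where
  "fC u z = exp (\<i> * z * of_real u) / cosh (of_real pi * z)"

lemma cosh_pi_zero:
  assumes "cosh (of_real pi * z) = 0" "-1/2 < Im z" "Im z < 3/2"
  shows "z = \<i>/2"
proof -
  obtain x y where z: "z = Complex x y" by (cases z)
  have e: "of_real pi * z = Complex (pi*x) (pi*y)" by (simp add: z complex_eq_iff)
  have 1: "cosh (pi*x) * cos (pi*y) = 0" and 2: "sinh (pi*x) * sin (pi*y) = 0"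
    using assms(1) by (simp_all add: e cosh_Complex complex_eq_iff)
  have "cosh (pi*x) > 0" by simp
  then have c: "cos (pi*y) = 0" using 1 by simp
  then obtain i::int where i: "odd i" "pi*y = of_int i * (pi/2)" using cos_zero_iff_int by blast
  have "y = of_int i / 2" using i(2) by (simp add: field_simps)
  moreover have "-1/2 < y" "y < 3/2" using assms z by auto
  ultimately have "-1 < i" "i < 3" by linarith+
  with i(1) have "i = 1" by presburger
  then have "y = 1/2" using \<open>y = of_int i / 2\<close> by simp
  then have "sin (pi*y) = 1" using \<open>y = 1/2\<close> by (simp only:) simp
  then have "sinh (pi*x) = 0" using 2 by simp
  then have "x = 0" by simp
  then show ?thesis using z \<open>y = 1/2\<close> by (simp add: complex_eq_iff)
qed

lemma rect_integral:
  assumes "R > 0"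
  shows "contour_integral (rectpath (Complex (-R) 0) (Complex R 1)) (fC u) = 2 * exp (- u / 2)"
proof -
  define S where "S = {z. -1/2 < Im z} \<inter> {z. Im z < 3/2}"
  have oS: "open S" unfolding S_def by (intro open_Int open_halfspace_Im_gt open_halfspace_Im_lt)
  have cS: "connected S" unfolding S_def
    by (intro convex_connected convex_Int convex_halfspace_Im_gt convex_halfspace_Im_lt)
  have hol: "fC u holomorphic_on S - {\<i>/2}"
    unfolding fC_def
    by (intro holomorphic_intros) (auto simp: S_def dest: cosh_pi_zero)
  have pim: "path_image (rectpath (Complex (-R) 0) (Complex R 1)) \<subseteq> S - {\<i>/2}"
    using assms by (auto simp: path_image_rectpath S_def complex_eq_iff)
  have wn0: "\<forall>z. z \<notin> S \<longrightarrow> winding_number (rectpath (Complex (-R) 0) (Complex R 1)) z = 0"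
    using assms by (auto intro!: winding_number_rectpath_outside simp: S_def in_cbox_complex_iff)
  have "contour_integral (rectpath (Complex (-R) 0) (Complex R 1)) (fC u) =
      2 * pi * \<i> * (\<Sum>p\<in>{\<i>/2}. winding_number (rectpath (Complex (-R) 0) (Complex R 1)) p * residue (fC u) p)"
    by (rule Residue_theorem[OF oS cS _ hol _ _ pim wn0]) auto
  also have "\<dots> = 2 * pi * \<i> * (winding_number (rectpath (Complex (-R) 0) (Complex R 1)) (\<i>/2) * residue (fC u) (\<i>/2))"
    by simp
  also have "winding_number (rectpath (Complex (-R) 0) (Complex R 1)) (\<i>/2) = 1"
    using assms by (intro winding_number_rectpath) (auto simp: in_box_complex_iff)
  also have "residue (fC u) (\<i>/2) = exp (\<i> * (\<i>/2) * of_real u) / (of_real pi * sinh (of_real pi * (\<i>/2)))"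
  proof -
    have "residue (\<lambda>z. exp (\<i> * z * of_real u) / cosh (of_real pi * z)) (\<i>/2) =
          exp (\<i> * (\<i>/2) * of_real u) / (of_real pi * sinh (of_real pi * (\<i>/2)))"
    proof (rule residue_simple_pole_deriv[where s = UNIV])
      show "((\<lambda>z. cosh (of_real pi * z)) has_field_derivative (of_real pi * sinh (of_real pi * (\<i>/2)))) (at (\<i>/2))"
        by (auto intro!: derivative_eq_intros)
      have e: "of_real pi * (\<i>/2) = Complex 0 (pi/2)" by (simp add: complex_eq_iff)
      show "cosh (of_real pi * (\<i>/2)) = 0" unfolding e by (simp add: cosh_Complex complex_eq_iff)
      show "of_real pi * sinh (of_real pi * (\<i>/2)) \<noteq> 0" unfolding e by (simp add: sinh_Complex complex_eq_iff)
    qed (auto intro!: holomorphic_intros)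
    then show ?thesis by (simp add: fC_def[abs_def])
  qed
  also have "exp (\<i> * (\<i>/2) * of_real u) = of_real (exp (-u/2))"
    by (simp add: exp_of_real[symmetric])
  also have "of_real pi * sinh (of_real pi * (\<i>/2)) = \<i> * pi"
  proof -
    have e: "of_real pi * (\<i>/2) = Complex 0 (pi/2)" by (simp add: complex_eq_iff)
    show ?thesis unfolding e by (simp add: sinh_Complex complex_eq_iff)
  qed
  finally show ?thesis by (simp add: field_simps)
qed

lemma cosh_pi_zero_gen:
  assumes "cosh (of_real pi * z) = 0"
  shows "Re z = 0 \<and> cos (pi * Im z) = 0"
proof -
  obtain x y where z: "z = Complex x y" by (cases z)
  have e: "of_real pi * z = Complex (pi*x) (pi*y)" by (simp add: z complex_eq_iff)
  have 1: "cosh (pi*x) * cos (pi*y) = 0" and 2: "sinh (pi*x) * sin (pi*y) = 0"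
    using assms(1) by (simp_all add: e cosh_Complex complex_eq_iff)
  have "cosh (pi*x) > 0" by simp
  then have c: "cos (pi*y) = 0" using 1 by simp
  then have "sin (pi*y) \<noteq> 0" using sin_cos_squared_add[of "pi*y"] by auto
  then have "sinh (pi*x) = 0" using 2 by simp
  then have "x = 0" by simp
  then show ?thesis using z c by simp
qed

lemma fC_nonzero_den:
  assumes "Im z = 0 \<or> Im z = 1 \<or> Re z \<noteq> 0"
  shows "cosh (of_real pi * z) \<noteq> 0"
proof
  assume "cosh (of_real pi * z) = 0"
  from cosh_pi_zero_gen[OF this] assms show False by auto
qed

lemma fC_shift: "fC u (Complex x 1) = - of_real (exp (-u)) * fC u (Complex x 0)"
proof -
  have e1: "of_real pi * Complex x 1 = Complex (pi*x) pi" by (simp add: complex_eq_iff)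
  have e0: "of_real pi * Complex x 0 = Complex (pi*x) 0" by (simp add: complex_eq_iff)
  have c: "cosh (of_real pi * Complex x 1) = - cosh (of_real pi * Complex x 0)"
    unfolding e1 e0 by (simp add: cosh_Complex complex_eq_iff)
  have ee: "\<i> * Complex x 1 * of_real u = of_real (-u) + \<i> * Complex x 0 * of_real u"
    by (simp add: complex_eq_iff)
  have "exp (\<i> * Complex x 1 * of_real u) = exp (of_real (-u)) * exp (\<i> * Complex x 0 * of_real u)"
    unfolding ee exp_add ..
  moreover have "exp (of_real (-u)) = (of_real (exp (-u)) :: complex)" by (rule exp_of_real)
  ultimately show ?thesis unfolding fC_def c by simp
qed

lemma fC_cont_Im:
  assumes "c = 0 \<or> c = 1"
  shows "continuous_on A (\<lambda>x. fC u (Complex x c))"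
  unfolding fC_def
  using assms by (intro continuous_intros continuous_on_cosh) 
     (auto intro!: fC_nonzero_den)

lemma fC_cont_Re:
  assumes "s \<noteq> 0"
  shows "continuous_on A (\<lambda>y. fC u (Complex s y))"
  unfolding fC_def
  by (intro continuous_intros continuous_on_cosh) (auto intro!: fC_nonzero_den simp: assms)

definition VV :: "real \<Rightarrow> real \<Rightarrow> complex" where
  "VV u s = integral {0..1} (\<lambda>y. fC u (Complex s y))"

definition II :: "real \<Rightarrow> real \<Rightarrow> complex" where
  "II u R = integral {-R..R} (\<lambda>x. fC u (Complex x 0))"

lemma rect_decomp:
  assumes "R > 0"
  shows "contour_integral (rectpath (Complex (-R) 0) (Complex R 1)) (fC u) =
         (1 + of_real (exp (-u))) * II u R + \<i> * (VV u R - VV u (-R))"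
proof -
  have rp: "rectpath (Complex (-R) 0) (Complex R 1) = linepath (Complex (-R) 0) (Complex R 0) +++
     (linepath (Complex R 0) (Complex R 1) +++ (linepath (Complex R 1) (Complex (-R) 1) +++ linepath (Complex (-R) 1) (Complex (-R) 0)))"
    by (simp add: rectpath_def Let_def)
  have hb: "(fC u has_contour_integral II u R) (linepath (Complex (-R) 0) (Complex R 0))"
    using assms unfolding II_def
    by (subst has_contour_integral_linepath_same_Im_iff[where c=0 and a="-R" and b=R])
       (auto intro!: integrable_integral integrable_continuous_interval fC_cont_Im)
  have hr: "(fC u has_contour_integral (\<i> * VV u R)) (linepath (Complex R 0) (Complex R 1))"
    using assms unfolding VV_def
    by (subst has_contour_integral_linepath_same_Re_iff[where c=R and a=0 and b=1])
       (auto intro!: integrable_integral integrable_continuous_interval fC_cont_Re)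
  have hl0: "(fC u has_contour_integral (\<i> * VV u (-R))) (linepath (Complex (-R) 0) (Complex (-R) 1))"
    using assms unfolding VV_def
    by (subst has_contour_integral_linepath_same_Re_iff[where c="-R" and a=0 and b=1])
       (auto intro!: integrable_integral integrable_continuous_interval fC_cont_Re)
  have ht0: "(fC u has_contour_integral (- of_real (exp (-u)) * II u R)) (linepath (Complex (-R) 1) (Complex R 1))"
  proof (subst has_contour_integral_linepath_same_Im_iff[where c=1 and a="-R" and b=R])
    have "((\<lambda>x. fC u (Complex x 0)) has_integral II u R) {-R..R}"
      unfolding II_def
      by (auto intro!: integrable_integral integrable_continuous_interval fC_cont_Im)
    then have "((\<lambda>x. - of_real (exp (-u)) * fC u (Complex x 0)) has_integral (- of_real (exp (-u)) * II u R)) {-R..R}"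
      by (rule has_integral_mult_right)
    then show "((\<lambda>x. fC u (Complex x 1)) has_integral (- of_real (exp (-u)) * II u R)) {-R..R}"
      by (simp only: fC_shift)
  qed (use assms in auto)
  have ht: "(fC u has_contour_integral (of_real (exp (-u)) * II u R)) (linepath (Complex R 1) (Complex (-R) 1))"
    using has_contour_integral_reversepath[OF _ ht0] by simp
  have hl: "(fC u has_contour_integral (- (\<i> * VV u (-R)))) (linepath (Complex (-R) 1) (Complex (-R) 0))"
    using has_contour_integral_reversepath[OF _ hl0] by simp
  have "(fC u has_contour_integral (II u R + (\<i> * VV u R + (of_real (exp (-u)) * II u R + - (\<i> * VV u (-R))))))
          (rectpath (Complex (-R) 0) (Complex R 1))"
    unfolding rp
    by (intro has_contour_integral_join hb hr ht hl valid_path_join) auto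
  then show ?thesis
    by (subst contour_integral_unique) (auto simp: algebra_simps)
qed

lemma norm_cosh_Complex_ge: "\<bar>sinh a\<bar> \<le> norm (cosh (Complex a b))"
proof -
  have "norm (cosh (Complex a b)) = sqrt ((cosh a * cos b)^2 + (sinh a * sin b)^2)"
    by (simp add: cosh_Complex cmod_def)
  also have "(cosh a * cos b)^2 + (sinh a * sin b)^2 = (sinh a)^2 + (cos b)^2"
  proof -
    have "(cosh a * cos b)^2 + (sinh a * sin b)^2 =
       (sinh a)^2 * ((sin b)^2 + (cos b)^2) + (cos b)^2 * ((cosh a)^2 - (sinh a)^2)"
      unfolding power_mult_distrib by algebra
    also have "(sin b)^2 + (cos b)^2 = 1" by simp
    also have "(cosh a)^2 - (sinh a)^2 = 1" by (simp add: cosh_square_eq)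
    finally show ?thesis by simp
  qed
  also have "sqrt ((sinh a)^2 + (cos b)^2) \<ge> sqrt ((sinh a)^2)"
    by (intro real_sqrt_le_mono) simp
  finally show ?thesis by simp
qed

lemma norm_fC_vert:
  assumes "s \<noteq> 0" "0 \<le> y" "y \<le> 1"
  shows "norm (fC u (Complex s y)) \<le> exp \<bar>u\<bar> / \<bar>sinh (pi * s)\<bar>"
proof -
  have n1: "norm (exp (\<i> * Complex s y * of_real u)) \<le> exp \<bar>u\<bar>"
  proof -
    have "norm (exp (\<i> * Complex s y * of_real u)) = exp (- (y * u))" by (simp add: norm_exp_eq_Re)
    also have "\<dots> \<le> exp \<bar>u\<bar>"
    proof -
      have "\<bar>y * u\<bar> \<le> \<bar>u\<bar>" using assms by (simp add: abs_mult mult_left_le_one_le)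
      then show ?thesis by simp
    qed
    finally show ?thesis .
  qed
  have e: "of_real pi * Complex s y = Complex (pi * s) (pi * y)" by (simp add: complex_eq_iff)
  have n2: "\<bar>sinh (pi * s)\<bar> \<le> norm (cosh (of_real pi * Complex s y))"
    unfolding e by (rule norm_cosh_Complex_ge)
  have pos: "\<bar>sinh (pi * s)\<bar> > 0" using assms by simp
  have "norm (fC u (Complex s y)) = norm (exp (\<i> * Complex s y * of_real u)) / norm (cosh (of_real pi * Complex s y))"
    by (simp add: fC_def norm_divide)
  also have "\<dots> \<le> exp \<bar>u\<bar> / \<bar>sinh (pi * s)\<bar>"
    by (rule frac_le) (use n1 n2 pos in auto)
  finally show ?thesis .
qed

lemma norm_VV:
  assumes "s \<noteq> 0"
  shows "norm (VV u s) \<le> exp \<bar>u\<bar> / \<bar>sinh (pi * s)\<bar>"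
proof -
  have "((\<lambda>y. fC u (Complex s y)) has_integral VV u s) {0..1}"
    unfolding VV_def using assms
    by (auto intro!: integrable_integral integrable_continuous_interval fC_cont_Re)
  from has_integral_bound_real[OF _ _ this, of "exp \<bar>u\<bar> / \<bar>sinh (pi * s)\<bar>" "{}"]
  show ?thesis using norm_fC_vert assms by simp
qed

lemma VV_lim: "(\<lambda>n. VV u (c * real (Suc n))) \<longlonglongrightarrow> 0" if "c = 1 \<or> c = -1"
proof (rule Lim_null_comparison)
  have b: "\<bar>sinh (pi * (c * real (Suc n)))\<bar> = (exp (pi * real (Suc n)) - exp (- (pi * real (Suc n)))) / 2" for n
  proof -
    have p: "sinh (pi * real (Suc n)) > 0" by simp
    have "\<bar>sinh (pi * (c * real (Suc n)))\<bar> = \<bar>sinh (pi * real (Suc n))\<bar>"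
    proof (cases "c = 1")
      case False
      then have "c = -1" using that by auto
      then have "pi * (c * real (Suc n)) = - (pi * real (Suc n))" by (simp add: algebra_simps)
      then show ?thesis by (simp only: sinh_minus abs_minus_cancel)
    qed simp
    then have "\<bar>sinh (pi * (c * real (Suc n)))\<bar> = sinh (pi * real (Suc n))"
      using p by simp
    then show ?thesis by (simp add: sinh_def)
  qed
  show "\<forall>\<^sub>F n in sequentially. norm (VV u (c * real (Suc n))) \<le> exp \<bar>u\<bar> / ((exp (pi * real (Suc n)) - exp (- (pi * real (Suc n)))) / 2)"
    using norm_VV[of "c * real (Suc _)" u] that b by (auto simp del: of_nat_Suc)
  have "((\<lambda>x::real. exp \<bar>u\<bar> / ((exp (pi * x) - exp (- (pi * x))) / 2)) \<longlongrightarrow> 0) at_top"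
    by real_asymp
  then show "(\<lambda>n. exp \<bar>u\<bar> / ((exp (pi * real (Suc n)) - exp (- (pi * real (Suc n)))) / 2)) \<longlonglongrightarrow> 0"
    by (rule filterlim_compose) (intro filterlim_compose[OF filterlim_real_sequentially] filterlim_Suc)
qed

lemma sech_integrable_lborel: "integrable lborel (\<lambda>x. 1 / cosh (pi * x))"
proof -
  have "set_integrable lborel (einterval (-\<infinity>) \<infinity>) (\<lambda>x. 1 / cosh (pi * x))"
  proof (rule interval_integral_FTC_nonneg[where F = "\<lambda>x. 2 / pi * arctan (exp (pi * x))" and A = 0 and B = 1])
    show "((\<lambda>x. 2 / pi * arctan (exp (pi * x))) has_real_derivative 1 / cosh (pi * x)) (at x)" for x
    proof -
      have "((\<lambda>x. 2 / pi * arctan (exp (pi * x))) has_real_derivative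
             2 / pi * (inverse (1 + (exp (pi * x))\<^sup>2) * (exp (pi * x) * pi))) (at x)"
        by (auto intro!: derivative_eq_intros)
      also have "2 / pi * (inverse (1 + (exp (pi * x))\<^sup>2) * (exp (pi * x) * pi)) = 1 / cosh (pi * x)"
      proof -
        have "exp (pi * x) * exp (- (pi * x)) = 1" by (simp add: exp_minus field_simps)
        then show ?thesis
          by (simp add: cosh_def field_simps power2_eq_square add_pos_pos)
             (simp add: exp_minus field_simps)
      qed
      finally show ?thesis .
    qed
    show "(((\<lambda>x. 2 / pi * arctan (exp (pi * x))) \<circ> real_of_ereal) \<longlongrightarrow> 0) (at_right (- \<infinity>))"
      unfolding ereal_tendsto_simps
      by real_asymp
    show "(((\<lambda>x. 2 / pi * arctan (exp (pi * x))) \<circ> real_of_ereal) \<longlongrightarrow> 1) (at_left \<infinity>)"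
      unfolding ereal_tendsto_simps
      by real_asymp
    show "isCont (\<lambda>x. 1 / cosh (pi * x)) x" for x
    proof -
      have "cosh (pi*x) > 0" by simp
      then show ?thesis by (intro continuous_intros) auto
    qed
  qed auto
  then show ?thesis by (simp add: set_integrable_def)
qed

lemma sech_integrable_on: "(\<lambda>x. 1 / cosh (pi * x)) integrable_on UNIV"
  by (rule integrable_on_lborel[OF sech_integrable_lborel])

lemma norm_fC_real: "norm (fC u (Complex x 0)) = 1 / cosh (pi * x)"
proof -
  have e: "of_real pi * Complex x 0 = Complex (pi * x) 0" by (simp add: complex_eq_iff)
  have "cosh (of_real pi * Complex x 0) = of_real (cosh (pi * x))"
    unfolding e by (simp add: cosh_Complex complex_eq_iff)
  then show ?thesis by (simp add: fC_def norm_divide norm_exp_eq_Re)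
qed

lemma II_lim: "(\<lambda>n. II u (real (Suc n))) \<longlonglongrightarrow> of_real (1 / cosh (u/2))"
proof -
  define E where "E = (of_real (exp (-u)) :: complex)"
  have E: "1 + E \<noteq> 0"
  proof
    assume "1 + E = 0"
    then have "Re (1 + E) = 0" by simp
    then show False unfolding E_def by (simp add: add_pos_pos) (smt (verit) exp_gt_zero)
  qed
  have eq: "II u (real (Suc n)) = (2 * of_real (exp (- u / 2)) - \<i> * (VV u (1 * real (Suc n)) - VV u (-1 * real (Suc n)))) / (1 + E)" for n
  proof -
    have R: "real (Suc n) > 0" by simp
    have "(1 + E) * II u (real (Suc n)) + \<i> * (VV u (real (Suc n)) - VV u (- real (Suc n))) = 2 * of_real (exp (- u / 2))"
      using rect_integral[OF R, of u] rect_decomp[OF R, of u] unfolding E_def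
      by (simp add: exp_of_real[symmetric])
    then show ?thesis using E by (simp add: field_simps)
  qed
  have "(\<lambda>n. (2 * of_real (exp (- u / 2)) - \<i> * (VV u (1 * real (Suc n)) - VV u (-1 * real (Suc n)))) / (1 + E))
        \<longlonglongrightarrow> (2 * of_real (exp (- u / 2)) - \<i> * (0 - 0)) / (1 + E)"
    by (intro tendsto_intros VV_lim E) auto
  also have "(2 * of_real (exp (- u / 2)) - \<i> * (0 - 0)) / (1 + E) = of_real (1 / cosh (u/2))"
  proof -
    define h where "h = exp (u/2)"
    have hp: "h > 0" unfolding h_def by simp
    have a: "exp (-u) = 1 / (h * h)" unfolding h_def by (simp add: exp_minus field_simps flip: exp_add)
    have b: "exp (-u/2) = 1 / h" unfolding h_def by (simp add: exp_minus inverse_eq_divide)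
    have c: "cosh (u/2) = (h + 1/h) / 2" unfolding h_def cosh_def by (simp add: exp_minus inverse_eq_divide)
    have "2 * exp (- u / 2) / (1 + exp (-u)) = 1 / cosh (u/2)"
      unfolding a b c using hp by (simp add: field_simps)
    moreover have "(2 * of_real (exp (- u / 2)) - \<i> * (0 - 0)) / (1 + E) =
        (of_real (2 * exp (- u / 2) / (1 + exp (-u))) :: complex)"
      unfolding E_def by simp
    ultimately show ?thesis by simp
  qed
  finally show ?thesis unfolding eq .
qed

theorem fC_FT: "((\<lambda>x. fC u (Complex x 0)) has_integral of_real (1 / cosh (u/2))) UNIV"
proof -
  define f where "f k x = (if x \<in> {-real (Suc k)..real (Suc k)} then fC u (Complex x 0) else 0)" for k x
  have fi: "f k integrable_on UNIV" for k
    unfolding f_def integrable_restrict_UNIV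
    by (intro integrable_continuous_interval fC_cont_Im) auto
  have le: "norm (f k x) \<le> 1 / cosh (pi * x)" for k x
    by (auto simp: f_def norm_fC_real)
  have conv: "(\<lambda>k. f k x) \<longlonglongrightarrow> fC u (Complex x 0)" for x
  proof (rule tendsto_eventually)
    obtain N :: nat where "\<bar>x\<bar> \<le> real N" using real_arch_simple by blast
    then show "\<forall>\<^sub>F k in sequentially. f k x = fC u (Complex x 0)"
      unfolding eventually_sequentially f_def by (intro exI[of _ N]) auto
  qed
  note dc = dominated_convergence[OF fi sech_integrable_on le conv]
  have "integral UNIV (f k) = II u (real (Suc k))" for k
    unfolding f_def II_def integral_restrict_UNIV by simp
  with dc(2) have "(\<lambda>k. II u (real (Suc k))) \<longlonglongrightarrow> integral UNIV (\<lambda>x. fC u (Complex x 0))" by simp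
  with II_lim have "integral UNIV (\<lambda>x. fC u (Complex x 0)) = of_real (1 / cosh (u/2))"
    using LIMSEQ_unique by blast
  with dc(1) show ?thesis using integrable_integral by fastforce
qed

theorem sech_FT: "((\<lambda>x. cos (x * u) / cosh (pi * x)) has_integral 1 / cosh (u/2)) UNIV"
proof -
  have "Re (fC u (Complex x 0)) = cos (x * u) / cosh (pi * x)" for x
  proof -
    have e: "of_real pi * Complex x 0 = Complex (pi * x) 0" by (simp add: complex_eq_iff)
    have "cosh (of_real pi * Complex x 0) = of_real (cosh (pi * x))"
      unfolding e by (simp add: cosh_Complex complex_eq_iff)
    then show ?thesis by (simp add: fC_def Re_exp Re_divide_of_real mult.commute)
  qed
  with has_integral_Re[OF fC_FT[of u]] show ?thesis by simp
qed


lemma exp_I0i: "set_integrable lborel {0<..} (\<lambda>r::real. exp (-r))"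
         "(LINT r:{0<..}|lborel. exp (-r::real)) = 1"
proof -
  note * = interval_integral_FTC_nonneg[where F = "\<lambda>r. - exp (-r)" and A = "-1" and B = 0
       and a = 0 and b = \<infinity> and f = "\<lambda>r. exp (-r)"]
  have h: "((\<lambda>r::real. - exp (-r)) \<longlongrightarrow> 0) at_top" by real_asymp
  have h0: "((\<lambda>r::real. - exp (-r)) \<longlongrightarrow> -1) (at_right 0)" by real_asymp
  have **: "set_integrable lborel (einterval 0 \<infinity>) (\<lambda>r::real. exp (-r))"
          "(LBINT r=0..\<infinity>. exp (-r)) = 0 - (-1)"
    by (rule *(1); auto intro!: derivative_eq_intros simp: zero_ereal_def ereal_tendsto_simps h h0)
       (rule *(2); auto intro!: derivative_eq_intros simp: zero_ereal_def ereal_tendsto_simps h h0)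
  show "set_integrable lborel {0<..} (\<lambda>r::real. exp (-r))"
    using **(1) by (simp add: zero_ereal_def)
  show "(LINT r:{0<..}|lborel. exp (-r::real)) = 1"
    using **(2) by (simp add: interval_lebesgue_integral_0_infty)
qed

lemma expcos_I0i:
  fixes b :: real
  shows "set_integrable lborel {0<..} (\<lambda>r. exp (-r) * cos (b * r))"
        "(LINT r:{0<..}|lborel. exp (-r) * cos (b * r)) = 1 / (1 + b^2)"
proof -
  show si: "set_integrable lborel {0<..} (\<lambda>r. exp (-r) * cos (b * r))"
    by (rule set_integrable_bound[OF exp_I0i(1)])
       (auto simp: set_borel_measurable_def abs_mult intro!: mult_left_le_one_le)
  define F where "F r = exp (-r) * (b * sin (b * r) - cos (b * r)) / (1 + b^2)" for r
  have pos: "1 + b^2 > 0" by (simp add: add_pos_nonneg)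
  have "(LBINT r=0..\<infinity>. exp (-r) * cos (b * r)) = 0 - (- 1 / (1 + b^2))"
  proof (rule interval_integral_FTC_integrable[where F = F])
    show "(F has_vector_derivative exp (- x) * cos (b * x)) (at x)" for x
    proof -
      have "(F has_real_derivative (exp (-x) * (b * (cos (b * x) * b) + sin (b * x) * b) * (1 + b^2)
             - exp (-x) * (b * sin (b * x) - cos (b * x))*(1 + b^2)) / (1 + b^2) / (1 + b^2)) (at x)"
        unfolding F_def using pos
        by (auto intro!: derivative_eq_intros simp: field_simps)
      also have "(exp (-x) * (b * (cos (b * x) * b) + sin (b * x) * b) * (1 + b^2)
             - exp (-x) * (b * sin (b * x) - cos (b * x))*(1 + b^2)) / (1 + b^2) / (1 + b^2) = exp (- x) * cos (b * x)"
      proof -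
        have "exp (-x) * (b * (cos (b * x) * b) + sin (b * x) * b) * (1 + b^2)
             - exp (-x) * (b * sin (b * x) - cos (b * x))*(1 + b^2) = (exp (- x) * cos (b * x)) * ((1 + b^2) * (1 + b^2))"
          by (simp add: power2_eq_square) algebra
        then show ?thesis using pos by simp
      qed
      finally show ?thesis by (simp add: has_real_derivative_iff_has_vector_derivative)
    qed
    show "set_integrable lborel (einterval 0 \<infinity>) (\<lambda>x. exp (- x) * cos (b * x))"
      using si by (simp add: zero_ereal_def)
    have "(F \<longlongrightarrow> F 0) (at_right 0)" unfolding F_def
      using pos by (intro tendsto_intros continuous_intros) auto
    then show "((F \<circ> real_of_ereal) \<longlongrightarrow> - 1 / (1 + b\<^sup>2)) (at_right 0)"
      by (simp add: zero_ereal_def ereal_tendsto_simps F_def)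
    show "((F \<circ> real_of_ereal) \<longlongrightarrow> 0) (at_left \<infinity>)"
      unfolding ereal_tendsto_simps
    proof (rule Lim_null_comparison)
      show "\<forall>\<^sub>F x in at_top. norm (F x) \<le> exp (-x) * (\<bar>b\<bar> + 1) / (1 + b^2)"
      proof (intro always_eventually allI)
        fix x
        have "\<bar>b * sin (b * x) - cos (b * x)\<bar> \<le> \<bar>b\<bar> + 1"
        proof -
          have "\<bar>b * sin (b * x)\<bar> \<le> \<bar>b\<bar>" unfolding abs_mult by (rule mult_left_le) auto
          moreover have "\<bar>cos (b * x)\<bar> \<le> 1" by simp
          ultimately show ?thesis by linarith
        qed
        then show "norm (F x) \<le> exp (-x) * (\<bar>b\<bar> + 1) / (1 + b^2)"
          unfolding F_def using pos by (simp add: abs_mult divide_right_mono)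
      qed
      have "((\<lambda>x::real. exp (-x)) \<longlongrightarrow> 0) at_top" by real_asymp
      then show "((\<lambda>x. exp (-x) * (\<bar>b\<bar> + 1) / (1 + b^2)) \<longlongrightarrow> 0) at_top"
        by (intro tendsto_divide_zero tendsto_mult_left_zero)
    qed
  qed (auto simp: zero_ereal_def)
  then show "(LINT r:{0<..}|lborel. exp (-r) * cos (b * r)) = 1 / (1 + b^2)"
    by (simp add: interval_lebesgue_integral_0_infty)
qed

lemma sech_I0i:
  fixes a :: real
  shows "set_integrable lborel {0<..} (\<lambda>r. exp (-r) / cosh (a + r))"
        "(LINT r:{0<..}|lborel. exp (-r) / cosh (a + r)) = exp a * ln (1 + exp (-2*a))"
proof -
  define F where "F r = - exp a * ln (1 + exp (-2*a - 2*r))" for r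
  have D: "(F has_real_derivative exp (-r) / cosh (a + r)) (at r)" for r
  proof -
    have p: "1 + exp (-2*a - 2*r) > 0" by (simp add: add_pos_pos)
    have "(F has_real_derivative - exp a * (exp (-2*a - 2*r) * (0 - 2) / (1 + exp (-2*a - 2*r)))) (at r)"
      unfolding F_def using p by (auto intro!: derivative_eq_intros)
    also have "- exp a * (exp (-2*a - 2*r) * (0 - 2) / (1 + exp (-2*a - 2*r))) = exp (-r) / cosh (a + r)"
    proof -
      define X where "X = exp (a + r)"
      have X: "X > 0" unfolding X_def by simp
      have e1: "exp (-2*a - 2*r) = 1 / (X * X)" unfolding X_def
        by (simp add: exp_minus inverse_eq_divide field_simps flip: exp_add)
      have e2: "exp (-r) = exp a / X" unfolding X_def
        by (simp add: exp_minus inverse_eq_divide field_simps flip: exp_add)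
      have e0: "exp (-(a + r)) = 1 / X" unfolding X_def exp_minus inverse_eq_divide ..
      have e3: "cosh (a + r) = (X + 1 / X) / 2"
        by (simp only: cosh_def e0 X_def[symmetric]) simp
      show ?thesis unfolding e1 e2 e3 using X by (simp add: field_simps)
    qed
    finally show ?thesis .
  qed
  have nn: "0 \<le> exp (-r) / cosh (a + r)" for r
  proof -
    have "cosh (a + r) > 0" by simp
    then show ?thesis by simp
  qed
  have cont: "isCont (\<lambda>r. exp (-r) / cosh (a + r)) r" for r
  proof -
    have "cosh (a + r) > 0" by simp
    then show ?thesis by (intro continuous_intros) auto
  qed
  have l0: "(F \<longlongrightarrow> F 0) (at_right 0)"
  proof -
    have "1 + exp (- (2 * a)) \<noteq> 0" by (smt (verit) exp_gt_zero)
    then show ?thesis unfolding F_def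
      by (intro tendsto_intros) auto
  qed
  have linf: "(F \<longlongrightarrow> 0) at_top"
  proof -
    have "((\<lambda>r. exp (-2*a - 2*r)) \<longlongrightarrow> 0) at_top" by real_asymp
    then have "((\<lambda>r. - exp a * ln (1 + exp (-2*a - 2*r))) \<longlongrightarrow> - exp a * ln (1 + 0)) at_top"
      by (intro tendsto_intros) auto
    then show ?thesis unfolding F_def by simp
  qed
  note * = interval_integral_FTC_nonneg[where F = F and A = "F 0" and B = 0
       and a = 0 and b = \<infinity> and f = "\<lambda>r. exp (-r) / cosh (a + r)"]
  have **: "set_integrable lborel (einterval 0 \<infinity>) (\<lambda>r. exp (-r) / cosh (a + r))"
          "(LBINT r=0..\<infinity>. exp (-r) / cosh (a + r)) = 0 - F 0"
    by (rule *(1); auto simp: zero_ereal_def ereal_tendsto_simps D nn cont l0 linf)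
       (rule *(2); auto simp: zero_ereal_def ereal_tendsto_simps D nn cont l0 linf)
  show "set_integrable lborel {0<..} (\<lambda>r. exp (-r) / cosh (a + r))"
    using **(1) by (simp add: zero_ereal_def)
  show "(LINT r:{0<..}|lborel. exp (-r) / cosh (a + r)) = exp a * ln (1 + exp (-2*a))"
    using **(2) by (simp add: interval_lebesgue_integral_0_infty F_def)
qed

lemma borel_measurable_cosh_real [measurable]: "(cosh :: real \<Rightarrow> real) \<in> borel_measurable borel"
  by (intro borel_measurable_continuous_onI continuous_on_cosh continuous_on_id)

lemma sech_cos_L:
  shows "integrable lborel (\<lambda>w. cos (w * u) / cosh (pi * w))"
        "(\<integral>w. cos (w * u) / cosh (pi * w) \<partial>lborel) = 1 / cosh (u/2)"
proof -
  show i: "integrable lborel (\<lambda>w. cos (w * u) / cosh (pi * w))"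
  proof (rule Bochner_Integration.integrable_bound[OF sech_integrable_lborel])
    show "AE x in lborel. norm (cos (x * u) / cosh (pi * x)) \<le> norm (1 / cosh (pi * x))"
    proof (intro AE_I2)
      fix x :: real
      have "cosh (pi * x) > 0" by simp
      then show "norm (cos (x * u) / cosh (pi * x)) \<le> norm (1 / cosh (pi * x))"
        by (simp add: abs_divide divide_right_mono)
    qed
  qed measurable
  show "(\<integral>w. cos (w * u) / cosh (pi * w) \<partial>lborel) = 1 / cosh (u/2)"
    using integral_lborel[OF i] integral_unique[OF sech_FT[of u]] by simp
qed

lemma main_cos:
  fixes t :: real
  shows "integrable lborel (\<lambda>w. rho w * cos (w * t))"
        "(\<integral>w. rho w * cos (w * t) \<partial>lborel) = exp (t/2) * ln (1 + exp (-t)) + exp (-t/2) * ln (1 + exp t)"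
proof -
  have cpos: "cosh (pi * w) > 0" for w :: real by simp
  have rho_le: "\<bar>rho w\<bar> \<le> 2 * (1 / cosh (pi * w))" for w
  proof -
    have "rho w \<ge> 0" unfolding rho_def using cpos[of w] by (simp add: add_pos_nonneg)
    moreover have "rho w \<le> 2 * (1 / cosh (pi * w))" unfolding rho_def using cpos[of w]
      by (simp add: divide_le_eq add_pos_nonneg)
    ultimately show ?thesis by simp
  qed
  have rho_meas [measurable]: "rho \<in> borel_measurable borel"
    unfolding rho_def[abs_def] by measurable
  show i: "integrable lborel (\<lambda>w. rho w * cos (w * t))"
  proof (rule Bochner_Integration.integrable_bound[OF integrable_mult_right[OF sech_integrable_lborel, of 2]])
    show "AE x in lborel. norm (rho x * cos (x * t)) \<le> norm (2 * (1 / cosh (pi * x)))"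
    proof (intro AE_I2)
      fix x :: real
      have "\<bar>rho x * cos (x * t)\<bar> \<le> \<bar>rho x\<bar> * 1" unfolding abs_mult
        by (intro mult_left_mono) auto
      also have "\<dots> \<le> 2 * (1 / cosh (pi * x))" using rho_le[of x] by simp
      finally show "norm (rho x * cos (x * t)) \<le> norm (2 * (1 / cosh (pi * x)))"
        using cpos[of x] by simp
    qed
  qed measurable
  define H where "H w r = indicator {0<..} r * exp (-r) * cos (2 * w * r) * (2 * cos (w * t) / cosh (pi * w))"
    for w r :: real
  define G where "G w r = indicator {0<..} r * exp (-r) * (2 / cosh (pi * w))" for w r :: real
  have G_int: "integrable (lborel \<Otimes>\<^sub>M lborel) (\<lambda>(w, r). G w r)"
  proof (rule lborel_pair.Fubini_integrable)
    show "(\<lambda>(w, r). G w r) \<in> borel_measurable (lborel \<Otimes>\<^sub>M lborel)"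
      unfolding G_def by measurable
    have "(\<integral>r. norm ((\<lambda>(w, r). G w r) (w, r)) \<partial>lborel) = 2 / cosh (pi * w)" for w
    proof -
      have "(\<integral>r. norm ((\<lambda>(w, r). G w r) (w, r)) \<partial>lborel) =
            (\<integral>r. (2 / cosh (pi * w)) * (indicator {0<..} r *\<^sub>R exp (-r)) \<partial>lborel)"
        unfolding G_def using cpos[of w]
        by (intro Bochner_Integration.integral_cong) (auto simp: indicator_def)
      also have "\<dots> = (2 / cosh (pi * w)) * (LINT r:{0<..}|lborel. exp (-r))"
        unfolding set_lebesgue_integral_def by simp
      finally show ?thesis using exp_I0i(2) by simp
    qed
    then show "integrable lborel (\<lambda>w. \<integral>r. norm ((\<lambda>(w, r). G w r) (w, r)) \<partial>lborel)"
      using integrable_mult_right[OF sech_integrable_lborel, of 2] by simp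
    show "AE w in lborel. integrable lborel (\<lambda>r. (\<lambda>(w, r). G w r) (w, r))"
    proof (intro AE_I2)
      fix w
      have "integrable lborel (\<lambda>r. (2 / cosh (pi * w)) * (indicator {0<..} r *\<^sub>R exp (-r)))"
        using exp_I0i(1) unfolding set_integrable_def by (intro integrable_mult_right)
      then show "integrable lborel (\<lambda>r. (\<lambda>(w, r). G w r) (w, r))"
        unfolding G_def by (simp add: mult_ac)
    qed
  qed
  have H_int: "integrable (lborel \<Otimes>\<^sub>M lborel) (\<lambda>(w, r). H w r)"
  proof (rule Bochner_Integration.integrable_bound[OF G_int])
    show "(\<lambda>(w, r). H w r) \<in> borel_measurable (lborel \<Otimes>\<^sub>M lborel)"
      unfolding H_def by measurable
    show "AE x in lborel \<Otimes>\<^sub>M lborel. norm ((\<lambda>(w, r). H w r) x) \<le> norm ((\<lambda>(w, r). G w r) x)"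
    proof (intro AE_I2, clarify)
      fix w r :: real
      have a: "\<bar>cos (2 * w * r)\<bar> \<le> 1" "\<bar>cos (w * t)\<bar> \<le> 1" by auto
      have b: "\<bar>2 * cos (w * t) / cosh (pi * w)\<bar> \<le> 2 / cosh (pi * w)"
        using cpos[of w] a(2) by (simp add: abs_divide abs_mult divide_right_mono)
      have "\<bar>cos (2 * w * r) * (2 * cos (w * t) / cosh (pi * w))\<bar> \<le> 1 * (2 / cosh (pi * w))"
        unfolding abs_mult using a(1) b by (intro mult_mono) auto
      then have c: "\<bar>cos (2 * w * r) * (2 * cos (w * t) / cosh (pi * w))\<bar> \<le> \<bar>2 / cosh (pi * w)\<bar>"
        using cpos[of w] by simp
      have "H w r = (indicator {0<..} r * exp (-r)) * (cos (2 * w * r) * (2 * cos (w * t) / cosh (pi * w)))"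
        unfolding H_def by (simp add: mult_ac)
      moreover have "G w r = (indicator {0<..} r * exp (-r)) * (2 / cosh (pi * w))"
        unfolding G_def by (simp add: mult_ac)
      ultimately show "norm (H w r) \<le> norm (G w r)"
        unfolding real_norm_def by (simp only: abs_mult[of "indicator {0<..} r * exp (-r)"]) (intro mult_left_mono c abs_ge_zero)
    qed
  qed
  have F: "(\<integral>r. (\<integral>w. H w r \<partial>lborel) \<partial>lborel) = (\<integral>w. (\<integral>r. H w r \<partial>lborel) \<partial>lborel)"
    by (rule lborel_pair.Fubini_integral) (use H_int in simp)
  have inner_r: "(\<integral>r. H w r \<partial>lborel) = rho w * cos (w * t)" for w
  proof -
    have "(\<integral>r. H w r \<partial>lborel) = (\<integral>r. (2 * cos (w * t) / cosh (pi * w)) * (indicator {0<..} r *\<^sub>R (exp (-r) * cos ((2 * w) * r))) \<partial>lborel)"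
      unfolding H_def by (intro Bochner_Integration.integral_cong) (auto simp: mult_ac)
    also have "\<dots> = (2 * cos (w * t) / cosh (pi * w)) * (LINT r:{0<..}|lborel. exp (-r) * cos ((2 * w) * r))"
      unfolding set_lebesgue_integral_def by simp
    also have "\<dots> = rho w * cos (w * t)"
      unfolding expcos_I0i(2) rho_def by (simp add: power2_eq_square)
    finally show ?thesis .
  qed
  have inner_w: "(\<integral>w. H w r \<partial>lborel) = indicator {0<..} r *\<^sub>R (exp (-r) / cosh (t/2 + r) + exp (-r) / cosh (-t/2 + r))" for r
  proof -
    have "(\<integral>w. H w r \<partial>lborel) = (\<integral>w. (indicator {0<..} r * exp (-r)) *
            (cos (w * (t + 2 * r)) / cosh (pi * w) + cos (w * (t - 2 * r)) / cosh (pi * w)) \<partial>lborel)"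
    proof (intro Bochner_Integration.integral_cong refl)
      fix w
      have "2 * cos (2 * w * r) * cos (w * t) = cos (w * (t + 2 * r)) + cos (w * (t - 2 * r))"
        by (simp add: cos_add cos_diff algebra_simps)
      then show "H w r = (indicator {0<..} r * exp (-r)) *
            (cos (w * (t + 2 * r)) / cosh (pi * w) + cos (w * (t - 2 * r)) / cosh (pi * w))"
        unfolding H_def by (simp add: add_divide_distrib[symmetric] field_simps)
    qed
    also have "\<dots> = (indicator {0<..} r * exp (-r)) * (1 / cosh ((t + 2 * r)/2) + 1 / cosh ((t - 2 * r)/2))"
      by (simp add: Bochner_Integration.integral_add sech_cos_L)
    also have "(t + 2 * r)/2 = t/2 + r" by simp
    also have "(t - 2 * r)/2 = - (-t/2 + r)" by simp
    also have "cosh (- (-t/2 + r)) = cosh (-t/2 + r)" by (rule cosh_minus)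
    finally show ?thesis by (simp add: field_simps)
  qed
  have "(\<integral>w. rho w * cos (w * t) \<partial>lborel) = (\<integral>r. indicator {0<..} r *\<^sub>R (exp (-r) / cosh (t/2 + r) + exp (-r) / cosh (-t/2 + r)) \<partial>lborel)"
    using F by (simp add: inner_r inner_w)
  also have "\<dots> = (LINT r:{0<..}|lborel. exp (-r) / cosh (t/2 + r) + exp (-r) / cosh (-t/2 + r))"
    unfolding set_lebesgue_integral_def ..
  also have "\<dots> = (LINT r:{0<..}|lborel. exp (-r) / cosh (t/2 + r)) + (LINT r:{0<..}|lborel. exp (-r) / cosh (-t/2 + r))"
    by (rule set_integral_add) (rule sech_I0i)+
  also have "\<dots> = exp (t/2) * ln (1 + exp (-t)) + exp (-t/2) * ln (1 + exp t)"
    unfolding sech_I0i(2) by simp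
  finally show "(\<integral>w. rho w * cos (w * t) \<partial>lborel) = exp (t/2) * ln (1 + exp (-t)) + exp (-t/2) * ln (1 + exp t)" .
qed

lemma rho_props: "rho w \<ge> 0" "\<bar>rho w\<bar> \<le> 2 * (1 / cosh (pi * w))" "rho (-w) = rho w"
  "rho \<in> borel_measurable borel"
proof -
  have cpos: "cosh (pi * w) > 0" by simp
  show "rho w \<ge> 0" unfolding rho_def using cpos by (simp add: add_pos_nonneg)
  moreover have "rho w \<le> 2 * (1 / cosh (pi * w))" unfolding rho_def using cpos
    by (simp add: divide_le_eq add_pos_nonneg)
  ultimately show "\<bar>rho w\<bar> \<le> 2 * (1 / cosh (pi * w))" by simp
  show "rho (-w) = rho w" unfolding rho_def by simp
  show "rho \<in> borel_measurable borel" unfolding rho_def[abs_def] by measurable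
qed

lemma main_sin:
  fixes t :: real
  shows "integrable lborel (\<lambda>w. rho w * sin (w * t))"
        "(\<integral>w. rho w * sin (w * t) \<partial>lborel) = 0"
proof -
  note [measurable] = rho_props(4)
  show i: "integrable lborel (\<lambda>w. rho w * sin (w * t))"
  proof (rule Bochner_Integration.integrable_bound[OF integrable_mult_right[OF sech_integrable_lborel, of 2]])
    show "AE x in lborel. norm (rho x * sin (x * t)) \<le> norm (2 * (1 / cosh (pi * x)))"
    proof (intro AE_I2)
      fix x :: real
      have cpos: "cosh (pi * x) > 0" by simp
      have "\<bar>rho x * sin (x * t)\<bar> \<le> \<bar>rho x\<bar> * 1" unfolding abs_mult
        by (intro mult_left_mono) auto
      also have "\<dots> \<le> 2 * (1 / cosh (pi * x))" using rho_props(2)[of x] by simp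
      finally show "norm (rho x * sin (x * t)) \<le> norm (2 * (1 / cosh (pi * x)))"
        using cpos by simp
    qed
  qed measurable
  have "(\<integral>w. rho w * sin (w * t) \<partial>lborel) = \<bar>-1\<bar> *\<^sub>R (\<integral>w. rho (0 + (-1) * w) * sin ((0 + (-1) * w) * t) \<partial>lborel)"
    by (rule lborel_integral_real_affine) simp
  also have "\<dots> = (\<integral>w. - (rho w * sin (w * t)) \<partial>lborel)"
    by (simp add: rho_props(3))
  also have "\<dots> = - (\<integral>w. rho w * sin (w * t) \<partial>lborel)"
    by (rule Bochner_Integration.integral_minus)
  finally show "(\<integral>w. rho w * sin (w * t) \<partial>lborel) = 0" by simp
qed

definition gg :: "real \<Rightarrow> real" where
  "gg t = exp (t/2) * ln (1 + exp (-t)) + exp (-t/2) * ln (1 + exp t)"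

lemma FT_rho: "((\<lambda>w. of_real (rho w) * exp (\<i> * of_real (w * t))) has_integral of_real (gg t)) UNIV"
proof -
  have c: "((\<lambda>w. rho w * cos (w * t)) has_integral gg t) UNIV"
    using has_integral_integral_lborel[OF main_cos(1)[of t]] main_cos(2)[of t] by (simp add: gg_def)
  have s: "((\<lambda>w. rho w * sin (w * t)) has_integral 0) UNIV"
    using has_integral_integral_lborel[OF main_sin(1)[of t]] main_sin(2)[of t] by simp
  have "((\<lambda>w. of_real (rho w * cos (w * t)) + \<i> * of_real (rho w * sin (w * t))) has_integral
         (of_real (gg t) + \<i> * of_real 0)) UNIV"
    by (intro has_integral_add has_integral_mult_right has_integral_of_real c s)
  moreover have "of_real (rho w * cos (w * t)) + \<i> * of_real (rho w * sin (w * t)) =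
                 of_real (rho w) * exp (\<i> * of_real (w * t))" for w
    by (simp add: complex_eq_iff Re_exp Im_exp)
  ultimately show ?thesis by simp
qed

lemma integrand_eq:
  assumes "x > 0" "y > 0"
  shows "cnj (Phi w x) * Phi w y = of_real (sqrt (x * y)) * (of_real (rho w) * exp (\<i> * of_real (w * (ln x - ln y))))"
proof -
  have r: "rho w \<ge> 0" by (rule rho_props(1))
  have "sqrt (x * rho w) * sqrt (y * rho w) = (sqrt x * sqrt y) * (sqrt (rho w) * sqrt (rho w))"
    by (simp add: real_sqrt_mult mult_ac)
  also have "\<dots> = sqrt (x * y) * rho w" using r by (simp add: real_sqrt_mult)
  finally have sq: "sqrt (x * rho w) * sqrt (y * rho w) = sqrt (x * y) * rho w" .
  have e: "cnj (exp (- \<i> * complex_of_real (w * ln x))) * exp (- \<i> * complex_of_real (w * ln y)) =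
           exp (\<i> * of_real (w * (ln x - ln y)))"
    by (simp add: exp_cnj exp_add[symmetric] algebra_simps)
  have "cnj (Phi w x) * Phi w y = (cnj (exp (- \<i> * complex_of_real (w * ln x))) * exp (- \<i> * complex_of_real (w * ln y)))
        * of_real (sqrt (x * rho w) * sqrt (y * rho w))"
    unfolding Phi_def by (simp add: mult_ac)
  also have "\<dots> = of_real (sqrt (x * y)) * (of_real (rho w) * exp (\<i> * of_real (w * (ln x - ln y))))"
    unfolding e sq by (simp add: mult_ac)
  finally show ?thesis .
qed

lemma kent_eq:
  assumes "x > 0" "y > 0"
  shows "sqrt (x * y) * gg (ln x - ln y) = kent x y"
proof -
  have h1: "exp ((ln x - ln y)/2) = sqrt x / sqrt y"
  proof -
    have "exp ((ln x - ln y)/2) = exp (ln x / 2) / exp (ln y / 2)" by (simp add: diff_divide_distrib exp_diff)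
    also have "exp (ln x / 2) = sqrt x" using assms powr_half_sqrt[of x] by (simp add: powr_def)
    also have "exp (ln y / 2) = sqrt y" using assms powr_half_sqrt[of y] by (simp add: powr_def)
    finally show ?thesis .
  qed
  have h2: "exp (-(ln x - ln y)/2) = sqrt y / sqrt x"
  proof -
    have "exp (-(ln x - ln y)/2) = exp (ln y / 2) / exp (ln x / 2)" by (simp add: diff_divide_distrib exp_diff)
    also have "exp (ln x / 2) = sqrt x" using assms powr_half_sqrt[of x] by (simp add: powr_def)
    also have "exp (ln y / 2) = sqrt y" using assms powr_half_sqrt[of y] by (simp add: powr_def)
    finally show ?thesis .
  qed
  have h3: "exp (-(ln x - ln y)) = y / x" using assms by (simp add: exp_diff)
  have h4: "exp (ln x - ln y) = x / y" using assms by (simp add: exp_diff)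
  have "1 + y / x = (x + y) / x" using assms by (simp add: field_simps)
  then have l1: "ln (1 + y / x) = ln (x + y) - ln x"
    using assms by (simp add: ln_div)
  have "1 + x / y = (x + y) / y" using assms by (simp add: field_simps)
  then have l2: "ln (1 + x / y) = ln (x + y) - ln y"
    using assms by (simp add: ln_div)
  have sx: "sqrt (x * y) * (sqrt x / sqrt y) = x" "sqrt (x * y) * (sqrt y / sqrt x) = y"
    using assms by (simp_all add: real_sqrt_mult field_simps)
  have "sqrt (x * y) * gg (ln x - ln y) = x * ln (1 + y / x) + y * ln (1 + x / y)"
  proof -
    have "sqrt (x * y) * gg (ln x - ln y) = (sqrt (x * y) * (sqrt x / sqrt y)) * ln (1 + y / x) +
          (sqrt (x * y) * (sqrt y / sqrt x)) * ln (1 + x / y)"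
      unfolding gg_def h1 h2 h3 h4 by (simp only: distrib_left mult.assoc)
    then show ?thesis unfolding sx .
  qed
  also have "\<dots> = kent x y"
    unfolding l1 l2 kent_def eta_def using assms by (simp add: algebra_simps)
  finally show ?thesis .
qed

lemma rep:
  assumes "x > 0" "y > 0"
  shows "((\<lambda>w. cnj (Phi w x) * Phi w y) has_integral complex_of_real (kent x y)) UNIV"
proof -
  have "((\<lambda>w. of_real (sqrt (x * y)) * (of_real (rho w) * exp (\<i> * of_real (w * (ln x - ln y)))))
          has_integral of_real (sqrt (x * y)) * of_real (gg (ln x - ln y))) UNIV"
    by (intro has_integral_mult_right FT_rho)
  moreover have "of_real (sqrt (x * y)) * of_real (gg (ln x - ln y)) = (of_real (kent x y) :: complex)"
    using kent_eq[OF assms] by (metis of_real_mult)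
  ultimately show ?thesis using integrand_eq[OF assms] by simp
qed

lemma kent_zero: "kent 0 b = 0" "kent b 0 = 0"
  by (simp_all add: kent_def eta_def)

theorem lemma3:
  shows "pos_def_kernel {0..1} kent \<and>
    (\<forall>x\<in>{0<..1}. \<forall>y\<in>{0<..1}.
       ((\<lambda>w. cnj (Phi w x) * Phi w y) has_integral complex_of_real (kent x y)) UNIV)"
proof (intro conjI ballI)
  show "((\<lambda>w. cnj (Phi w x) * Phi w y) has_integral complex_of_real (kent x y)) UNIV"
    if "x \<in> {0<..1}" "y \<in> {0<..1}" for x y
    using that by (intro rep) auto
  show "pos_def_kernel {0..1} kent"
    unfolding pos_def_kernel_def
  proof (intro conjI ballI allI impI)
    show "kent x y = kent y x" for x y by (simp add: kent_def add.commute)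
    fix n :: nat and a :: "nat \<Rightarrow> real" and x :: "nat \<Rightarrow> real"
    assume X: "\<forall>i\<in>{1..n}. x i \<in> {0..1}"
    define P where "P w i = (if x i = 0 then 0 else Phi w (x i))" for w i
    have pair: "((\<lambda>w. cnj (P w i) * P w j) has_integral complex_of_real (kent (x i) (x j))) UNIV"
      if "i \<in> {1..n}" "j \<in> {1..n}" for i j
    proof (cases "x i = 0 \<or> x j = 0")
      case True
      then show ?thesis by (auto simp: P_def kent_zero)
    next
      case False
      then have "x i > 0" "x j > 0" using X that by force+
      then show ?thesis using False by (simp add: P_def rep)
    qed
    define S where "S w = (\<Sum>j\<in>{1..n}. of_real (a j) * P w j)" for w
    have "((\<lambda>w. \<Sum>i\<in>{1..n}. \<Sum>j\<in>{1..n}. of_real (a i * a j) * (cnj (P w i) * P w j)) has_integral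
           (\<Sum>i\<in>{1..n}. \<Sum>j\<in>{1..n}. of_real (a i * a j) * complex_of_real (kent (x i) (x j)))) UNIV"
      by (intro has_integral_sum has_integral_mult_right pair) auto
    moreover have "(\<Sum>i\<in>{1..n}. \<Sum>j\<in>{1..n}. of_real (a i * a j) * (cnj (P w i) * P w j)) =
                   of_real ((norm (S w))\<^sup>2)" for w
    proof -
      have "of_real ((norm (S w))\<^sup>2) = cnj (S w) * S w"
        by (subst complex_norm_square) (simp add: mult.commute)
      also have "\<dots> = (\<Sum>i\<in>{1..n}. of_real (a i) * cnj (P w i)) * (\<Sum>j\<in>{1..n}. of_real (a j) * P w j)"
        unfolding S_def by (simp add: cnj_sum)
      also have "\<dots> = (\<Sum>i\<in>{1..n}. \<Sum>j\<in>{1..n}. of_real (a i * a j) * (cnj (P w i) * P w j))"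
        unfolding sum_product by (simp add: mult_ac)
      finally show ?thesis by simp
    qed
    ultimately have "((\<lambda>w. of_real ((norm (S w))\<^sup>2)) has_integral
           (\<Sum>i\<in>{1..n}. \<Sum>j\<in>{1..n}. of_real (a i * a j) * complex_of_real (kent (x i) (x j)))) UNIV"
      by simp
    from has_integral_Re[OF this]
    have "((\<lambda>w. (norm (S w))\<^sup>2) has_integral
           (\<Sum>i\<in>{1..n}. \<Sum>j\<in>{1..n}. a i * a j * kent (x i) (x j))) UNIV"
      by (simp add: Re_sum)
    then show "0 \<le> (\<Sum>i\<in>{1..n}. \<Sum>j\<in>{1..n}. a i * a j * kent (x i) (x j))"
      by (rule has_integral_nonneg) simp
  qed
qed

end
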